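(* For every list (any length and initial order) and every request sequence $\sigma$, in the full cost model, $$\mathrm{MTFO}(\sigma)+\mathrm{MTFE}(\sigma)\le 4\cdot\mathrm{OPT}(\sigma).$$
   Context: Static list update: a list of distinct items in some initial order; serving a request to the item at position $i$ (from the front) costs $i$ (full cost model); the accessed item may be moved closer to the front for free (free exchange); two adjacent items may be swapped at cost $1$ (paid exchange). $A(\sigma)$ is the total cost of algorithm $A$ and $\mathrm{OPT}(\sigma)$ the minimum cost of any offline algorithm from the same initial list. MTFO moves a requested item to the front on the 1st, 3rd, 5th, ... request to that item; MTFE on the 2nd, 4th, 6th, ... request; otherwise they leave it in place, and they make no paid exchanges. *)

theory Defs
  imports Main
begin

text \<open>Static list update, full cost model. Positions are 0-based internally
(pos), so serving the item at (1-based) position i costs index + 1.\<close>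

text \<open>0-based position of the first occurrence of x in xs (length xs if absent).\<close>
fun pos :: "'a list \<Rightarrow> 'a \<Rightarrow> nat" where
  "pos [] x = 0"
| "pos (y # ys) x = (if y = x then 0 else Suc (pos ys x))"

text \<open>Paid exchange: swap the adjacent items at positions i and i+1
(no effect on the list if out of range, but it is still paid for).\<close>
definition swap :: "nat \<Rightarrow> 'a list \<Rightarrow> 'a list" where
  "swap i xs = (if Suc i < length xs then xs[i := xs ! Suc i, Suc i := xs ! i] else xs)"

fun swaps :: "nat list \<Rightarrow> 'a list \<Rightarrow> 'a list" where
  "swaps [] xs = xs"
| "swaps (i # is) xs = swap i (swaps is xs)"

definition move_fwd :: "nat \<Rightarrow> 'a \<Rightarrow> 'a list \<Rightarrow> 'a list" where
  "move_fwd k x xs = (if x \<in> set xs \<and> k \<le> pos xs x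
     then (let ys = remove1 x xs in take k ys @ x # drop k ys) else xs)"

text \<open>An offline action for one request: a list of paid exchanges performed
before serving the request, and the target position of the free exchange
applied to the requested item after serving it.\<close>
type_synonym action = "nat list \<times> nat"

fun cost_off :: "'a list \<Rightarrow> 'a list \<Rightarrow> action list \<Rightarrow> nat" where
  "cost_off s (x # rs) ((sws, k) # as) =
     length sws + (pos (swaps sws s) x + 1)
     + cost_off (move_fwd k x (swaps sws s)) rs as"
| "cost_off s _ _ = 0"

definition OPT :: "'a list \<Rightarrow> 'a list \<Rightarrow> nat" where
  "OPT init rs = Inf {cost_off init rs as | as. length as = length rs}"

definition mtf :: "'a \<Rightarrow> 'a list \<Rightarrow> 'a list" where
  "mtf x xs = (if x \<in> set xs then x # remove1 x xs else xs)"

text \<open>Counter-based move-to-front: on the c-th request to x (c counting from 1)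
move x to the front iff (odd c) = p. p = True gives MTFO, p = False gives MTFE.
No paid exchanges.\<close>
fun run_parity :: "bool \<Rightarrow> ('a \<Rightarrow> nat) \<Rightarrow> 'a list \<Rightarrow> 'a list \<Rightarrow> nat" where
  "run_parity p c s [] = 0"
| "run_parity p c s (x # rs) =
     (let c' = c(x := Suc (c x));
          s' = (if odd (c' x) = p then mtf x s else s)
      in pos s x + 1 + run_parity p c' s' rs)"

definition MTFO :: "'a list \<Rightarrow> 'a list \<Rightarrow> nat" where
  "MTFO init rs = run_parity True (\<lambda>_. 0) init rs"

definition MTFE :: "'a list \<Rightarrow> 'a list \<Rightarrow> nat" where
  "MTFE init rs = run_parity False (\<lambda>_. 0) init rs"

end

theory Submission
  imports Defs
begin

lemma pos_lt: "x \<in> set xs \<Longrightarrow> pos xs x < length xs"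
  by (induction xs) auto

lemma pos_nth: "x \<in> set xs \<Longrightarrow> xs ! pos xs x = x"
  by (induction xs) auto

lemma pos_inj: "a \<in> set xs \<Longrightarrow> b \<in> set xs \<Longrightarrow> pos xs a = pos xs b \<Longrightarrow> a = b"
  by (metis pos_nth)

lemma pos_of_nth: "distinct xs \<Longrightarrow> i < length xs \<Longrightarrow> pos xs (xs ! i) = i"
proof (induction xs arbitrary: i)
  case Nil then show ?case by simp
next
  case (Cons y ys) then show ?case
    by (cases i) (auto simp: nth_mem)
qed

lemma pos_insert:
  assumes "x \<notin> set ys" "a \<in> set ys \<or> a = x"
  shows "pos (take k ys @ x # drop k ys) a =
    (if a = x then min k (length ys) else if pos ys a < k then pos ys a else Suc (pos ys a))"
  using assms
proof (induction ys arbitrary: k)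
  case Nil then show ?case by simp
next
  case (Cons y ys)
  show ?case
  proof (cases k)
    case 0 then show ?thesis using Cons.prems by auto
  next
    case (Suc k') then show ?thesis using Cons.prems Cons.IH[of k'] by auto
  qed
qed

lemma pos_remove1:
  assumes "distinct xs" "x \<in> set xs" "a \<in> set xs" "a \<noteq> x"
  shows "pos (remove1 x xs) a = (if pos xs a < pos xs x then pos xs a else pos xs a - 1)"
  using assms
proof (induction xs)
  case Nil then show ?case by simp
next
  case (Cons y ys)
  show ?case
  proof (cases "y = x")
    case True then show ?thesis using Cons.prems by auto
  next
    case False
    then have "x \<in> set ys" using Cons.prems by auto
    show ?thesis
    proof (cases "a = y")
      case True then show ?thesis using False by auto
    next
      case False2: False
      then have "a \<in> set ys" using Cons.prems by auto
      have "pos ys a \<noteq> pos ys x" using \<open>a \<in> set ys\<close> \<open>x \<in> set ys\<close> Cons.prems(4) by (metis pos_inj)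
      then show ?thesis using Cons.IH \<open>a \<in> set ys\<close> \<open>x \<in> set ys\<close> Cons.prems False False2
        by auto
    qed
  qed
qed

definition bef :: "'a list \<Rightarrow> 'a \<Rightarrow> 'a \<Rightarrow> bool" where
  "bef xs a b \<longleftrightarrow> pos xs a < pos xs b"

lemma pos_neq: "a \<in> set xs \<Longrightarrow> b \<in> set xs \<Longrightarrow> a \<noteq> b \<Longrightarrow> pos xs a \<noteq> pos xs b"
  by (metis pos_inj)

lemma bef_asym: "a \<in> set xs \<Longrightarrow> b \<in> set xs \<Longrightarrow> a \<noteq> b \<Longrightarrow> bef xs b a \<longleftrightarrow> \<not> bef xs a b"
  unfolding bef_def using pos_neq[of a xs b] by auto

lemma mtf_set: "distinct xs \<Longrightarrow> set (mtf x xs) = set xs"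
  unfolding mtf_def by auto

lemma mtf_distinct: "distinct xs \<Longrightarrow> distinct (mtf x xs)"
  unfolding mtf_def by auto

lemma mf_set_distinct:
  assumes "distinct xs"
  shows "set (move_fwd k x xs) = set xs \<and> distinct (move_fwd k x xs)"
proof (cases "x \<in> set xs \<and> k \<le> pos xs x")
  case True
  let ?ys = "remove1 x xs"
  have d: "distinct ?ys" and nx: "x \<notin> set ?ys" and sy: "set ?ys = set xs - {x}"
    using assms by auto
  have "distinct (take k ?ys @ drop k ?ys)" using d by simp
  then have "distinct (take k ?ys @ x # drop k ?ys)"
    using nx by (auto dest: in_set_takeD in_set_dropD simp del: append_take_drop_id)
  moreover have "set (take k ?ys @ x # drop k ?ys) = insert x (set ?ys)"
    by (metis Un_insert_right append_take_drop_id list.simps(15) set_append)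
  ultimately show ?thesis using True sy unfolding move_fwd_def by (auto simp: Let_def)
next
  case False then show ?thesis using assms unfolding move_fwd_def by auto
qed

lemma bef_mtf_other:
  assumes "distinct xs" "x \<in> set xs" "a \<in> set xs" "b \<in> set xs" "a \<noteq> x" "b \<noteq> x"
  shows "bef (mtf x xs) a b = bef xs a b"
proof -
  have "pos xs a \<noteq> pos xs x" "pos xs b \<noteq> pos xs x" using assms pos_neq by metis+
  then show ?thesis using assms unfolding bef_def mtf_def
    by (auto simp: pos_remove1)
qed

lemma bef_mtf_x:
  assumes "x \<in> set xs" "a \<noteq> x"
  shows "bef (mtf x xs) x a \<and> \<not> bef (mtf x xs) a x"
  using assms unfolding bef_def mtf_def by auto

lemma bef_mf_other:
  assumes "distinct xs" "a \<in> set xs" "b \<in> set xs" "a \<noteq> x" "b \<noteq> x"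
  shows "bef (move_fwd k x xs) a b = bef xs a b"
proof (cases "x \<in> set xs \<and> k \<le> pos xs x")
  case True
  let ?ys = "remove1 x xs"
  have nx: "x \<notin> set ?ys" using assms by auto
  have ay: "a \<in> set ?ys" "b \<in> set ?ys" using assms by (auto simp: set_remove1_eq)
  have "pos xs a \<noteq> pos xs x" "pos xs b \<noteq> pos xs x" using assms True pos_neq by metis+
  then show ?thesis using True assms nx ay unfolding bef_def move_fwd_def
    by (auto simp: Let_def pos_insert pos_remove1)
next
  case False then show ?thesis unfolding move_fwd_def by auto
qed

lemma bef_mf_x:
  assumes "distinct xs" "a \<in> set xs" "a \<noteq> x" "bef (move_fwd k x xs) a x"
  shows "bef xs a x"
proof (cases "x \<in> set xs \<and> k \<le> pos xs x")
  case True
  let ?ys = "remove1 x xs"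
  have nx: "x \<notin> set ?ys" using assms by auto
  have ay: "a \<in> set ?ys" using assms by (auto simp: set_remove1_eq)
  have pl: "pos ?ys a < length ?ys" using ay pos_lt by metis
  have "pos xs a \<noteq> pos xs x" using assms True pos_neq by metis
  then show ?thesis using True assms nx ay pl unfolding bef_def move_fwd_def
    by (auto simp: Let_def pos_insert pos_remove1 split: if_splits)
next
  case False then show ?thesis using assms unfolding move_fwd_def by auto
qed

lemma swap_set_distinct:
  assumes "distinct xs" shows "set (swap i xs) = set xs \<and> distinct (swap i xs)"
  using assms unfolding swap_def by (simp add: set_swap distinct_swap)

lemma swaps_set_distinct:
  assumes "distinct xs" shows "set (swaps is xs) = set xs \<and> distinct (swaps is xs)"
  using assms by (induction "is") (auto simp: swap_set_distinct)

lemma pos_swap: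
  assumes "distinct xs" "Suc i < length xs" "z \<in> set xs"
  shows "pos (swap i xs) z = (if z = xs ! i then Suc i else if z = xs ! Suc i then i else pos xs z)"
proof -
  let ?ys = "swap i xs"
  have ys: "?ys = xs[i := xs ! Suc i, Suc i := xs ! i]" using assms unfolding swap_def by simp
  have d: "distinct ?ys" using swap_set_distinct[OF assms(1)] by blast
  have l: "length ?ys = length xs" using ys by simp
  show ?thesis
  proof (cases "z = xs ! i")
    case True
    have "?ys ! Suc i = z" using ys True assms by simp
    then show ?thesis using pos_of_nth[OF d, of "Suc i"] l assms True by simp
  next
    case F1: False
    show ?thesis
    proof (cases "z = xs ! Suc i")
      case True
      have "?ys ! i = z" using ys True assms by (simp add: nth_list_update)
      then show ?thesis using pos_of_nth[OF d, of i] l assms True F1 by simp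
    next
      case False
      let ?j = "pos xs z"
      have j: "?j < length xs" "xs ! ?j = z" using assms pos_lt pos_nth by metis+
      have "?j \<noteq> i" "?j \<noteq> Suc i" using j F1 False by auto
      then have "?ys ! ?j = z" using ys j by (simp add: nth_list_update)
      then show ?thesis using pos_of_nth[OF d, of ?j] l j F1 False by simp
    qed
  qed
qed

lemma bef_swap:
  assumes "distinct xs" "a \<in> set xs" "b \<in> set xs"
    "\<not> (Suc i < length xs \<and> ((a = xs ! i \<and> b = xs ! Suc i) \<or> (b = xs ! i \<and> a = xs ! Suc i)))"
  shows "bef (swap i xs) a b = bef xs a b"
proof (cases "Suc i < length xs")
  case True
  have pa: "a = xs ! i \<Longrightarrow> pos xs a = i" "a = xs ! Suc i \<Longrightarrow> pos xs a = Suc i"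
       "b = xs ! i \<Longrightarrow> pos xs b = i" "b = xs ! Suc i \<Longrightarrow> pos xs b = Suc i"
    using pos_of_nth[OF assms(1)] True by auto
  have na: "a \<noteq> xs ! i \<Longrightarrow> pos xs a \<noteq> i" "a \<noteq> xs ! Suc i \<Longrightarrow> pos xs a \<noteq> Suc i"
       "b \<noteq> xs ! i \<Longrightarrow> pos xs b \<noteq> i" "b \<noteq> xs ! Suc i \<Longrightarrow> pos xs b \<noteq> Suc i"
    using pos_nth assms by metis+
  have ne: "xs ! i \<noteq> xs ! Suc i" using assms(1) True by (simp add: nth_eq_iff_index_eq)
  show ?thesis using True assms pa na ne unfolding bef_def
    by (auto simp: pos_swap)
next
  case False then show ?thesis unfolding swap_def by simp
qed

definition F :: "bool \<Rightarrow> bool \<Rightarrow> bool \<Rightarrow> bool \<Rightarrow> bool \<Rightarrow> nat" where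
  "F u e p ca cb = (if u = e then (if u = p then 0 else 3)
     else if \<not> u then (if \<not> p then (if cb then 1 else 2) else (if ca then 2 else 1))
     else (if \<not> p then (if cb then 2 else 1) else (if ca then 1 else 2)))"

lemma F_le3: "F u e p ca cb \<le> 3"
  unfolding F_def by auto

lemma pair_ineq:
  assumes "p2 \<longrightarrow> p"
  shows "2 * (of_bool u + of_bool e) + F (if \<not> cx then False else u) (if \<not> cx then e else False) p2 ca (\<not> cx)
      + F (\<not> (if \<not> cx then False else u)) (\<not> (if \<not> cx then e else False)) (\<not> p2) (\<not> cx) ca
    \<le> 8 * of_bool p + F u e p ca cx + F (\<not> u) (\<not> e) (\<not> p) cx ca"
  using assms unfolding F_def by (cases u; cases e; cases p; cases p2; cases ca; cases cx) simp_all

lemma F_init: "F u u u False False = 0"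
  unfolding F_def by simp

definition Phi :: "'a set \<Rightarrow> ('a \<Rightarrow> nat) \<Rightarrow> 'a list \<Rightarrow> 'a list \<Rightarrow> 'a list \<Rightarrow> nat" where
  "Phi S c sO sE sP = (\<Sum>a\<in>S. \<Sum>b\<in>S - {a}. F (bef sO a b) (bef sE a b) (bef sP a b) (odd (c a)) (odd (c b)))"

lemma sum_split:
  assumes "finite S" "x \<in> S"
  shows "(\<Sum>a\<in>S. \<Sum>b\<in>S - {a}. G a b) = (\<Sum>a\<in>S - {x}. G a x + G x a + (\<Sum>b\<in>S - {a} - {x}. G a b))"
proof -
  have "(\<Sum>a\<in>S. \<Sum>b\<in>S - {a}. G a b) = (\<Sum>b\<in>S - {x}. G x b) + (\<Sum>a\<in>S - {x}. \<Sum>b\<in>S - {a}. G a b)"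
    using assms by (simp add: sum.remove)
  also have "(\<Sum>a\<in>S - {x}. \<Sum>b\<in>S - {a}. G a b) = (\<Sum>a\<in>S - {x}. G a x + (\<Sum>b\<in>S - {a} - {x}. G a b))"
  proof (rule sum.cong)
    fix a assume "a \<in> S - {x}"
    then have "x \<in> S - {a}" using assms by auto
    then show "(\<Sum>b\<in>S - {a}. G a b) = G a x + (\<Sum>b\<in>S - {a} - {x}. G a b)"
      using assms by (simp add: sum.remove)
  qed simp
  finally show ?thesis by (simp add: sum.distrib ac_simps)
qed

lemma sum_step:
  fixes G G' :: "'a \<Rightarrow> 'a \<Rightarrow> nat" and h k :: "'a \<Rightarrow> nat"
  assumes "finite S" "x \<in> S"
    and same: "\<And>a b. a \<in> S - {x} \<Longrightarrow> b \<in> S - {a} - {x} \<Longrightarrow> G' a b = G a b"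
    and pair: "\<And>a. a \<in> S - {x} \<Longrightarrow> G' a x + G' x a + h a \<le> k a + G a x + G x a"
  shows "(\<Sum>a\<in>S. \<Sum>b\<in>S - {a}. G' a b) + (\<Sum>a\<in>S - {x}. h a)
     \<le> (\<Sum>a\<in>S - {x}. k a) + (\<Sum>a\<in>S. \<Sum>b\<in>S - {a}. G a b)"
proof -
  have "(\<Sum>a\<in>S. \<Sum>b\<in>S - {a}. G' a b) + (\<Sum>a\<in>S - {x}. h a)
      = (\<Sum>a\<in>S - {x}. G' a x + G' x a + h a + (\<Sum>b\<in>S - {a} - {x}. G a b))"
    using sum_split[OF assms(1,2), of G'] same by (simp add: sum.distrib ac_simps)
  also have "\<dots> \<le> (\<Sum>a\<in>S - {x}. k a + G a x + G x a + (\<Sum>b\<in>S - {a} - {x}. G a b))"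
    apply (rule sum_mono) apply (rule add_right_mono) apply (rule pair) by simp
  also have "\<dots> = (\<Sum>a\<in>S - {x}. k a) + (\<Sum>a\<in>S. \<Sum>b\<in>S - {a}. G a b)"
    using sum_split[OF assms(1,2), of G] by (simp add: sum.distrib ac_simps)
  finally show ?thesis .
qed

lemma pos_card:
  assumes "distinct xs" "x \<in> set xs"
  shows "card {a \<in> set xs. pos xs a < pos xs x} = pos xs x"
proof -
  have "pos xs ` {a \<in> set xs. pos xs a < pos xs x} = {0..<pos xs x}"
  proof
    show "pos xs ` {a \<in> set xs. pos xs a < pos xs x} \<subseteq> {0..<pos xs x}" by auto
    show "{0..<pos xs x} \<subseteq> pos xs ` {a \<in> set xs. pos xs a < pos xs x}"
    proof
      fix j assume j: "j \<in> {0..<pos xs x}"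
      then have jl: "j < length xs" using pos_lt[OF assms(2)] by auto
      have "pos xs (xs ! j) = j" using pos_of_nth[OF assms(1) jl] .
      then show "j \<in> pos xs ` {a \<in> set xs. pos xs a < pos xs x}"
        using j jl by (metis (mono_tags, lifting) atLeastLessThan_iff image_eqI mem_Collect_eq nth_mem)
    qed
  qed
  moreover have "inj_on (pos xs) {a \<in> set xs. pos xs a < pos xs x}"
    by (rule inj_onI) (metis (no_types, lifting) mem_Collect_eq pos_inj)
  ultimately show ?thesis by (metis card_atLeastLessThan card_image diff_zero)
qed

lemma pos_sum:
  assumes "distinct xs" "x \<in> set xs"
  shows "pos xs x = (\<Sum>a\<in>set xs - {x}. of_bool (bef xs a x))"
proof -
  have "(\<Sum>a\<in>set xs - {x}. of_bool (bef xs a x) :: nat) = card ((set xs - {x}) \<inter> {a. bef xs a x})"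
    by (simp add: sum.If_cases)
  also have "(set xs - {x}) \<inter> {a. bef xs a x} = {a \<in> set xs. pos xs a < pos xs x}"
    unfolding bef_def by auto
  finally show ?thesis using pos_card[OF assms] by simp
qed

lemma count_D:
  assumes "finite S" "finite D"
  shows "(\<Sum>a\<in>S. \<Sum>b\<in>S - {a}. of_bool ((a, b) \<in> D) :: nat) \<le> card D"
proof -
  have "(\<Sum>a\<in>S. \<Sum>b\<in>S - {a}. of_bool ((a, b) \<in> D) :: nat)
      = (\<Sum>p\<in>Sigma S (\<lambda>a. S - {a}). of_bool (p \<in> D))"
    using assms by (subst sum.Sigma) auto
  also have "\<dots> = card (Sigma S (\<lambda>a. S - {a}) \<inter> D)"
    using assms by (simp add: sum_of_bool_eq Int_def)
  also have "\<dots> \<le> card D"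
    using assms(2) by (intro card_mono) auto
  finally show ?thesis .
qed

lemma Phi_swap:
  assumes "finite S" "distinct sP" "set sP = S"
  shows "Phi S c sO sE (swap i sP) \<le> Phi S c sO sE sP + 8"
proof -
  define D where "D = {(sP ! i, sP ! Suc i), (sP ! Suc i, sP ! i)}"
  have fD: "finite D" unfolding D_def by simp
  let ?T = "\<lambda>xs a b. F (bef sO a b) (bef sE a b) (bef xs a b) (odd (c a)) (odd (c b))"
  have pt: "?T (swap i sP) a b \<le> ?T sP a b + 3 * of_bool ((a, b) \<in> D)" if "a \<in> S" "b \<in> S" for a b
  proof (cases "(a, b) \<in> D")
    case True then show ?thesis using F_le3 by (simp add: trans_le_add2)
  next
    case False
    then have "bef (swap i sP) a b = bef sP a b"
      using bef_swap[OF assms(2)] that assms(3) unfolding D_def by auto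
    then show ?thesis by simp
  qed
  have "Phi S c sO sE (swap i sP) \<le> (\<Sum>a\<in>S. \<Sum>b\<in>S - {a}. ?T sP a b + 3 * of_bool ((a, b) \<in> D))"
    unfolding Phi_def by (intro sum_mono) (use pt in auto)
  also have "\<dots> = Phi S c sO sE sP + 3 * (\<Sum>a\<in>S. \<Sum>b\<in>S - {a}. of_bool ((a, b) \<in> D))"
    unfolding Phi_def by (simp add: sum.distrib sum_distrib_left)
  also have "\<dots> \<le> Phi S c sO sE sP + 3 * card D"
    using count_D[OF assms(1) fD] by (rule_tac add_left_mono, rule_tac mult_left_mono) auto
  finally have "Phi S c sO sE (swap i sP) \<le> Phi S c sO sE sP + 3 * card D" .
  moreover have "card D \<le> 2" unfolding D_def by (rule card_insert_le_m1; simp)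
  ultimately show ?thesis by linarith
qed

lemma Phi_swaps:
  assumes "finite S" "distinct sP" "set sP = S"
  shows "Phi S c sO sE (swaps sws sP) \<le> Phi S c sO sE sP + 8 * length sws"
proof (induction sws)
  case Nil then show ?case by simp
next
  case (Cons i sws)
  have "distinct (swaps sws sP)" "set (swaps sws sP) = S"
    using swaps_set_distinct[OF assms(2)] assms(3) by auto
  then have "Phi S c sO sE (swap i (swaps sws sP)) \<le> Phi S c sO sE (swaps sws sP) + 8"
    using Phi_swap[OF assms(1)] by blast
  then show ?case using Cons.IH by simp
qed

lemma serve_step:
  assumes fin: "finite S" and xS: "x \<in> S"
    and dO: "distinct sO" and dE: "distinct sE" and dP: "distinct sP"
    and sO: "set sO = S" and sE: "set sE = S" and sP: "set sP = S"
  shows "2 * (pos sO x + pos sE x)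
      + Phi S (c(x := Suc (c x))) (if odd (c x) then sO else mtf x sO) (if odd (c x) then mtf x sE else sE)
           (move_fwd k x sP)
    \<le> 8 * pos sP x + Phi S c sO sE sP"
proof -
  define c' where "c' = c(x := Suc (c x))"
  define sO' where "sO' = (if odd (c x) then sO else mtf x sO)"
  define sE' where "sE' = (if odd (c x) then mtf x sE else sE)"
  define sP' where "sP' = move_fwd k x sP"
  have sO': "set sO' = S" "distinct sO'" unfolding sO'_def using sO dO mtf_set[OF dO] mtf_distinct[OF dO] by auto
  have sE': "set sE' = S" "distinct sE'" unfolding sE'_def using sE dE mtf_set[OF dE] mtf_distinct[OF dE] by auto
  have sP': "set sP' = S" "distinct sP'" unfolding sP'_def using sP mf_set_distinct[OF dP, of k x] by auto
  define G where "G a b = F (bef sO a b) (bef sE a b) (bef sP a b) (odd (c a)) (odd (c b))" for a b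
  define G' where "G' a b = F (bef sO' a b) (bef sE' a b) (bef sP' a b) (odd (c' a)) (odd (c' b))" for a b
  define h where "h a = 2 * (of_bool (bef sO a x) + of_bool (bef sE a x) :: nat)" for a
  define k' where "k' a = 8 * (of_bool (bef sP a x) :: nat)" for a
  have same: "G' a b = G a b" if "a \<in> S - {x}" "b \<in> S - {a} - {x}" for a b
  proof -
    have "bef sO' a b = bef sO a b" unfolding sO'_def
      using bef_mtf_other[OF dO] that sO xS by auto
    moreover have "bef sE' a b = bef sE a b" unfolding sE'_def
      using bef_mtf_other[OF dE] that sE xS by auto
    moreover have "bef sP' a b = bef sP a b" unfolding sP'_def
      using bef_mf_other[OF dP] that sP by auto
    moreover have "c' a = c a" "c' b = c b" unfolding c'_def using that by auto
    ultimately show ?thesis unfolding G_def G'_def by simp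
  qed
  have pair: "G' a x + G' x a + h a \<le> k' a + G a x + G x a" if a: "a \<in> S - {x}" for a
  proof -
    have aS: "a \<in> S" "a \<noteq> x" using a by auto
    let ?u = "bef sO a x" and ?e = "bef sE a x" and ?p = "bef sP a x" and ?p2 = "bef sP' a x"
    let ?ca = "odd (c a)" and ?cx = "odd (c x)"
    have p2: "?p2 \<longrightarrow> ?p" unfolding sP'_def using bef_mf_x[OF dP] aS sP by blast
    have o1: "bef sO' a x = (if \<not> ?cx then False else ?u)" unfolding sO'_def
      using bef_mtf_x[of x sO a] aS xS sO by auto
    have o2: "bef sO' x a = (\<not> bef sO' a x)" using bef_asym sO' aS xS by metis
    have e1: "bef sE' a x = (if \<not> ?cx then ?e else False)" unfolding sE'_def
      using bef_mtf_x[of x sE a] aS xS sE by auto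
    have e2: "bef sE' x a = (\<not> bef sE' a x)" using bef_asym sE' aS xS by metis
    have q2: "bef sP' x a = (\<not> ?p2)" using bef_asym sP' aS xS by metis
    have q1: "bef sP x a = (\<not> ?p)" using bef_asym sP dP aS xS by metis
    have r1: "bef sO x a = (\<not> ?u)" using bef_asym sO dO aS xS by metis
    have r2: "bef sE x a = (\<not> ?e)" using bef_asym sE dE aS xS by metis
    have cc: "odd (c' a) = ?ca" "odd (c' x) = (\<not> ?cx)" unfolding c'_def using aS by auto
    have eq1: "G' a x = F (if \<not> ?cx then False else ?u) (if \<not> ?cx then ?e else False) ?p2 ?ca (\<not> ?cx)"
      unfolding G'_def using o1 e1 cc by simp
    have eq2: "G' x a = F (\<not> (if \<not> ?cx then False else ?u)) (\<not> (if \<not> ?cx then ?e else False)) (\<not> ?p2) (\<not> ?cx) ?ca"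
      unfolding G'_def using o1 o2 e1 e2 q2 cc by simp
    have eq3: "G a x = F ?u ?e ?p ?ca ?cx" unfolding G_def by simp
    have eq4: "G x a = F (\<not> ?u) (\<not> ?e) (\<not> ?p) ?cx ?ca" unfolding G_def using q1 r1 r2 by simp
    show ?thesis unfolding h_def k'_def eq1 eq2 eq3 eq4 using pair_ineq[where cx = "odd (c x)" and u = "bef sO a x" and e = "bef sE a x" and ca = "odd (c a)", OF p2]
      by linarith
  qed
  have main: "(\<Sum>a\<in>S. \<Sum>b\<in>S - {a}. G' a b) + (\<Sum>a\<in>S - {x}. h a)
     \<le> (\<Sum>a\<in>S - {x}. k' a) + (\<Sum>a\<in>S. \<Sum>b\<in>S - {a}. G a b)"
    by (rule sum_step[where G=G and G'=G' and h=h and k=k', OF fin xS same pair])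
  have hs: "(\<Sum>a\<in>S - {x}. h a) = 2 * (pos sO x + pos sE x)"
    unfolding h_def using pos_sum[OF dO, of x] pos_sum[OF dE, of x] sO sE xS
    by (simp add: sum.distrib sum_distrib_left)
  have ks: "(\<Sum>a\<in>S - {x}. k' a) = 8 * pos sP x"
    unfolding k'_def using pos_sum[OF dP, of x] sP xS
    by (simp add: sum_distrib_left)
  have "Phi S c' sO' sE' sP' = (\<Sum>a\<in>S. \<Sum>b\<in>S - {a}. G' a b)" unfolding Phi_def G'_def ..
  moreover have "Phi S c sO sE sP = (\<Sum>a\<in>S. \<Sum>b\<in>S - {a}. G a b)" unfolding Phi_def G_def ..
  ultimately show ?thesis using main hs ks unfolding c'_def sO'_def sE'_def sP'_def by linarith
qed

lemma main:
  assumes "finite S" "distinct sO" "distinct sE" "distinct sP" "set sO = S" "set sE = S" "set sP = S"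
    "set rs \<subseteq> S" "length as = length rs"
  shows "2 * (run_parity True c sO rs + run_parity False c sE rs) \<le> 8 * cost_off sP rs as + Phi S c sO sE sP"
  using assms
proof (induction rs arbitrary: c sO sE sP "as")
  case Nil then show ?case by simp
next
  case (Cons x rs)
  obtain sws k as' where as: "as = (sws, k) # as'" and las: "length as' = length rs"
    using Cons.prems(9) by (cases "as") auto
  have xS: "x \<in> S" and rsS: "set rs \<subseteq> S" using Cons.prems(8) by auto
  define sP1 where "sP1 = swaps sws sP"
  have sP1: "distinct sP1" "set sP1 = S" unfolding sP1_def
    using swaps_set_distinct[OF Cons.prems(4)] Cons.prems(7) by auto
  define c' where "c' = c(x := Suc (c x))"
  define sO' where "sO' = (if odd (c x) then sO else mtf x sO)"
  define sE' where "sE' = (if odd (c x) then mtf x sE else sE)"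
  define sP' where "sP' = move_fwd k x sP1"
  have sO': "set sO' = S" "distinct sO'" unfolding sO'_def
    using Cons.prems mtf_set[OF Cons.prems(2)] mtf_distinct[OF Cons.prems(2)] by auto
  have sE': "set sE' = S" "distinct sE'" unfolding sE'_def
    using Cons.prems mtf_set[OF Cons.prems(3)] mtf_distinct[OF Cons.prems(3)] by auto
  have sP': "set sP' = S" "distinct sP'" unfolding sP'_def
    using sP1 mf_set_distinct[OF sP1(1), of k x] by auto
  have r1: "run_parity True c sO (x # rs) = pos sO x + 1 + run_parity True c' sO' rs"
    unfolding c'_def sO'_def by (simp add: Let_def)
  have r2: "run_parity False c sE (x # rs) = pos sE x + 1 + run_parity False c' sE' rs"
    unfolding c'_def sE'_def by (simp add: Let_def)
  have co: "cost_off sP (x # rs) as = length sws + (pos sP1 x + 1) + cost_off sP' rs as'"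
    unfolding as sP1_def sP'_def by simp
  have IH: "2 * (run_parity True c' sO' rs + run_parity False c' sE' rs) \<le> 8 * cost_off sP' rs as' + Phi S c' sO' sE' sP'"
    using Cons.IH[of sO' sE' sP' as' c'] Cons.prems(1) sO' sE' sP' rsS las by auto
  have st: "2 * (pos sO x + pos sE x) + Phi S c' sO' sE' sP' \<le> 8 * pos sP1 x + Phi S c sO sE sP1"
    unfolding c'_def sO'_def sE'_def sP'_def
    using serve_step[OF Cons.prems(1) xS Cons.prems(2,3) sP1(1) Cons.prems(5,6) sP1(2)] .
  have sw: "Phi S c sO sE sP1 \<le> Phi S c sO sE sP + 8 * length sws"
    unfolding sP1_def using Phi_swaps[OF Cons.prems(1,4,7)] .
  show ?case unfolding r1 r2 co using IH st sw by (simp add: add_mult_distrib2)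
qed

lemma Phi_init: "Phi S (\<lambda>_. 0) xs xs xs = 0"
  unfolding Phi_def by (simp add: F_init)

theorem lemma10:
  fixes init rs :: "'a list"
  assumes "distinct init" and "set rs \<subseteq> set init"
  shows "MTFO init rs + MTFE init rs \<le> 4 * OPT init rs"
proof -
  let ?A = "{cost_off init rs as | as. length as = length rs}"
  have ne: "?A \<noteq> {}" by (auto intro!: exI[of _ "replicate (length rs) ([], 0)"])
  then have "Inf ?A \<in> ?A" by (rule Inf_nat_def1)
  then obtain as where las: "length as = length rs" and opt: "OPT init rs = cost_off init rs as"
    unfolding OPT_def by auto
  have "2 * (MTFO init rs + MTFE init rs) \<le> 8 * cost_off init rs as + Phi (set init) (\<lambda>_. 0) init init init"
    unfolding MTFO_def MTFE_def using main[OF _ assms(1) assms(1) assms(1) refl refl refl assms(2) las] by simp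
  then show ?thesis unfolding opt Phi_init by simp
qed

end
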